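(* For every $n\ge4$, $\operatorname{sdim}(K_{n-3}+\epsilon_3)=n-1$.
   Context: $\epsilon_3$ is the graph with three vertices and no edges; $K_{n-3}+\epsilon_3$ is obtained from disjoint copies of $K_{n-3}$ and $\epsilon_3$ by adding all edges between them. A unit-distance embedding of a graph $G$ in $\mathbb{R}^n$ is an injective map $f$ from the vertex set of $G$ to $\mathbb{R}^n$ such that $|f(u)-f(v)|=1$ for every edge $uv$ and no point $f(w)$ lies on the segment $[f(u),f(v)]$ for an edge $uv$ with $w\notin\{u,v\}$. $G$ admits a spherical embedding of dimension $k$ and radius $r$ if $G$ has a unit-distance embedding in $\mathbb{R}^k$ all of whose vertices lie on a sphere $\{x\in\mathbb{R}^k:|x-c|=r\}$. $\operatorname{sdim}G$ is the least $k$ such that $G$ admits a spherical embedding of dimension $k$ and some radius $r<1$. *)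

theory Defs
  imports Complex_Main
begin

text \<open>Points of R^k are represented as functions nat => real vanishing outside {..<k}.\<close>

definition in_Rk :: "nat \<Rightarrow> (nat \<Rightarrow> real) \<Rightarrow> bool" where
  "in_Rk k x \<longleftrightarrow> (\<forall>i\<ge>k. x i = 0)"

definition dist_k :: "nat \<Rightarrow> (nat \<Rightarrow> real) \<Rightarrow> (nat \<Rightarrow> real) \<Rightarrow> real" where
  "dist_k k x y = sqrt (\<Sum>i<k. (x i - y i)^2)"

definition on_segment :: "(nat \<Rightarrow> real) \<Rightarrow> (nat \<Rightarrow> real) \<Rightarrow> (nat \<Rightarrow> real) \<Rightarrow> bool" where
  "on_segment x a b \<longleftrightarrow> (\<exists>t::real. 0 \<le> t \<and> t \<le> 1 \<and> x = (\<lambda>i. (1 - t) * a i + t * b i))"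

text \<open>A graph is given by a vertex set V and a symmetric edge relation E (only used on V).\<close>

definition unit_distance_embedding ::
  "nat \<Rightarrow> 'a set \<Rightarrow> ('a \<Rightarrow> 'a \<Rightarrow> bool) \<Rightarrow> ('a \<Rightarrow> nat \<Rightarrow> real) \<Rightarrow> bool" where
  "unit_distance_embedding k V E f \<longleftrightarrow>
     (\<forall>v\<in>V. in_Rk k (f v)) \<and> inj_on f V \<and>
     (\<forall>u\<in>V. \<forall>v\<in>V. E u v \<longrightarrow> dist_k k (f u) (f v) = 1) \<and>
     (\<forall>u\<in>V. \<forall>v\<in>V. \<forall>w\<in>V. E u v \<and> w \<noteq> u \<and> w \<noteq> v \<longrightarrow> \<not> on_segment (f w) (f u) (f v))"

definition spherical_embedding ::
  "nat \<Rightarrow> real \<Rightarrow> 'a set \<Rightarrow> ('a \<Rightarrow> 'a \<Rightarrow> bool) \<Rightarrow> bool" where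
  "spherical_embedding k r V E \<longleftrightarrow>
     (\<exists>f c. unit_distance_embedding k V E f \<and> in_Rk k c \<and> (\<forall>v\<in>V. dist_k k (f v) c = r))"

definition sdim :: "'a set \<Rightarrow> ('a \<Rightarrow> 'a \<Rightarrow> bool) \<Rightarrow> nat" where
  "sdim V E = (LEAST k. \<exists>r<1. spherical_embedding k r V E)"

text \<open>K_{n-3} + eps_3 on vertex set {..<n}: vertices 0,1,2 form eps_3, the rest K_{n-3},
  plus all edges between the two parts.\<close>

definition K_plus_eps3_edge :: "nat \<Rightarrow> nat \<Rightarrow> bool" where
  "K_plus_eps3_edge u v \<longleftrightarrow> u \<noteq> v \<and> \<not> (u < 3 \<and> v < 3)"

end

theory Submission
  imports Defs "HOL-Library.Function_Algebras"
begin


definition sc :: "real \<Rightarrow> (nat \<Rightarrow> real) \<Rightarrow> (nat \<Rightarrow> real)" where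
  "sc c x = (\<lambda>i. c * x i)"

interpretation fv: vector_space sc
  by unfold_locales (auto simp: sc_def fun_eq_iff algebra_simps)

lemma fun_sum_apply: "(\<Sum>x\<in>A. g x) (i::nat) = (\<Sum>x\<in>A. (g x i :: real))"
  by (induction A rule: infinite_finite_induct) auto

lemma dep_k:
  fixes Y :: "(nat\<Rightarrow>real) set"
  assumes fin: "finite Y" and cardY: "card Y > k" and inR: "\<forall>y\<in>Y. in_Rk k y"
  shows "\<exists>a. (\<forall>i. (\<Sum>y\<in>Y. a y * y i) = 0) \<and> (\<exists>y\<in>Y. a y \<noteq> 0)"
proof -
  define e where "e j = (\<lambda>i::nat. if i = j then 1 else (0::real))" for j
  define T where "T = e ` {..<k}"
  have fT: "finite T" unfolding T_def by simp
  have cT: "card T \<le> k" unfolding T_def using card_image_le[of "{..<k}" e] by simp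
  have sp: "Y \<subseteq> fv.span T"
  proof
    fix y assume "y \<in> Y"
    hence yk: "in_Rk k y" using inR by auto
    have "y = (\<Sum>j<k. sc (y j) (e j))"
    proof
      fix i
      show "y i = (\<Sum>j<k. sc (y j) (e j)) i"
        unfolding fun_sum_apply sc_def e_def
        using yk by (cases "i < k") (auto simp: in_Rk_def if_distrib cong: if_cong)
    qed
    also have "\<dots> \<in> fv.span T"
      by (intro fv.span_sum fv.span_scale fv.span_base) (auto simp: T_def)
    finally show "y \<in> fv.span T" .
  qed
  have "fv.dependent Y"
  proof (rule ccontr)
    assume "\<not> fv.dependent Y"
    from fv.independent_span_bound[OF fT this sp] cT cardY show False by simp
  qed
  then obtain t u where t: "finite t" "t \<subseteq> Y" "(\<Sum>v\<in>t. sc (u v) v) = 0" "\<exists>v\<in>t. u v \<noteq> 0"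
    unfolding fv.dependent_explicit by blast
  define a where "a y = (if y \<in> t then u y else 0)" for y
  have "\<forall>i. (\<Sum>y\<in>Y. a y * y i) = 0"
  proof
    fix i
    have "(\<Sum>y\<in>Y. a y * y i) = (\<Sum>y\<in>Y. if y \<in> t then u y * y i else 0)"
      by (rule sum.cong) (auto simp: a_def)
    also have "\<dots> = (\<Sum>y\<in>Y \<inter> t. u y * y i)"
      using sum.inter_restrict[OF fin, of "\<lambda>y. u y * y i" t] by simp
    also have "\<dots> = (\<Sum>y\<in>t. u y * y i)" using t(2) by (simp add: Int_absorb1)
    also have "\<dots> = (\<Sum>v\<in>t. sc (u v) v) i" unfolding fun_sum_apply sc_def by simp
    also have "\<dots> = 0" using t(3) by simp
    finally show "(\<Sum>y\<in>Y. a y * y i) = 0" .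
  qed
  moreover have "\<exists>y\<in>Y. a y \<noteq> 0" using t(2,4) unfolding a_def by auto
  ultimately show ?thesis by blast
qed



lemma dist_sq: "dist_k k x y = r \<Longrightarrow> (\<Sum>i<k. (x i - y i)^2) = r^2"
proof -
  assume h: "dist_k k x y = r"
  have "0 \<le> (\<Sum>i<k. (x i - y i)^2)" by (intro sum_nonneg) simp
  hence "(sqrt (\<Sum>i<k. (x i - y i)^2))^2 = (\<Sum>i<k. (x i - y i)^2)" by simp
  thus ?thesis using h unfolding dist_k_def by simp
qed

lemma lower:
  assumes n: "n \<ge> 4" and kle: "k \<le> n - 2"
    and emb: "unit_distance_embedding k {..<n} K_plus_eps3_edge f"
    and cR: "in_Rk k c" and sph: "\<forall>v\<in>{..<n}. dist_k k (f v) c = r"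
  shows False
proof -
  define y where "y v = (\<lambda>i. f v i - c i)" for v
  define G where "G u v = (\<Sum>i<k. y u i * y v i)" for u v
  define m where "m = n - 3"
  define C where "C = {3..<n}"
  define s where "s = r^2 - 1/2"
  define S where "S i = (\<Sum>j\<in>C. y j i)" for i
  have m1: "m \<ge> 1" using n unfolding m_def by simp
  have cardC: "card C = m" unfolding C_def m_def by simp
  have finC: "finite C" unfolding C_def by simp
  have fR: "\<And>v. v < n \<Longrightarrow> in_Rk k (f v)"
    using emb unfolding unit_distance_embedding_def by auto
  have injf: "inj_on f {..<n}"
    using emb unfolding unit_distance_embedding_def by auto
  have injy: "inj_on y {..<n}"
  proof (rule inj_onI)
    fix u v assume "u \<in> {..<n}" "v \<in> {..<n}" "y u = y v"
    hence "\<forall>i. f u i - c i = f v i - c i" by (simp add: y_def fun_eq_iff)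
    hence "f u = f v" by (simp add: fun_eq_iff)
    with injf \<open>u \<in> {..<n}\<close> \<open>v \<in> {..<n}\<close> show "u = v" by (meson inj_onD)
  qed
  have Gd: "G v v = r^2" if "v < n" for v
  proof -
    have "(\<Sum>i<k. (f v i - c i)^2) = r^2" using dist_sq[of k "f v" c r] sph that by auto
    thus ?thesis unfolding G_def y_def by (simp add: power2_eq_square)
  qed
  have Gsym: "G u v = G v u" for u v unfolding G_def by (simp add: mult.commute)
  have diffsq: "(\<Sum>i<k. (f u i - f v i)^2) = G u u + G v v - 2 * G u v" for u v
  proof -
    have "(\<Sum>i<k. (f u i - f v i)^2) = (\<Sum>i<k. y u i * y u i + y v i * y v i - 2*(y u i * y v i))"
      by (rule sum.cong) (auto simp: y_def power2_eq_square algebra_simps)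
    also have "\<dots> = G u u + G v v - 2*G u v"
      by (simp add: G_def sum.distrib sum_subtractf sum_distrib_left)
    finally show ?thesis .
  qed
  have Ge: "G u v = s" if "u < n" "v < n" "K_plus_eps3_edge u v" for u v
  proof -
    have "dist_k k (f u) (f v) = 1" using emb that unfolding unit_distance_embedding_def by auto
    hence "(\<Sum>i<k. (f u i - f v i)^2) = 1" using dist_sq[of k "f u" "f v" 1] by simp
    thus ?thesis using diffsq[of u v] Gd[OF that(1)] Gd[OF that(2)] unfolding s_def by simp
  qed
  have pos: "(\<Sum>i<k. (f u i - f v i)^2) > 0" if "u < n" "v < n" "u \<noteq> v" for u v
  proof -
    have "f u \<noteq> f v" using injf that by (meson inj_onD lessThan_iff)
    then obtain i where i: "f u i \<noteq> f v i" by auto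
    have "i < k"
    proof (rule ccontr)
      assume "\<not> i < k"
      thus False using fR[OF that(1)] fR[OF that(2)] i unfolding in_Rk_def by auto
    qed
    have "0 < (f u i - f v i)^2" using i by simp
    also have "\<dots> \<le> (\<Sum>i<k. (f u i - f v i)^2)"
      by (rule member_le_sum) (use \<open>i < k\<close> in auto)
    finally show ?thesis .
  qed
  have dotS: "(\<Sum>i<k. y p i * S i) = real m * s" if "p < 3" for p
  proof -
    have "(\<Sum>i<k. y p i * S i) = (\<Sum>j\<in>C. G p j)"
      unfolding S_def G_def sum_distrib_left by (rule sum.swap)
    also have "\<dots> = (\<Sum>j\<in>C. s)"
      by (rule sum.cong) (use that n in \<open>auto simp: C_def K_plus_eps3_edge_def intro!: Ge\<close>)
    finally show ?thesis using cardC by simp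
  qed
  have pair: "\<forall>i<k. y p i + y q i = 4*s/(1+2*s*real m) * S i"
    if pq: "p < 3" "q < 3" "p \<noteq> q" for p q
  proof -
    define W where "W = insert p (insert q C)"
    have pC: "p \<notin> C" "q \<notin> C" using pq unfolding C_def by auto
    have Wn: "W \<subseteq> {..<n}" using pq n unfolding W_def C_def by auto
    have finW: "finite W" unfolding W_def using finC by simp
    have cardW: "card W = m + 2" unfolding W_def using pC pq finC cardC by simp
    have injW: "inj_on y W" using injy Wn by (rule inj_on_subset)
    have "card (y ` W) = m + 2" using card_image[OF injW] cardW by simp
    moreover have "m + 2 > k" using kle n unfolding m_def by simp
    moreover have "\<forall>z\<in>y ` W. in_Rk k z"
      using Wn fR cR unfolding y_def in_Rk_def by auto
    ultimately obtain a where a: "\<forall>i. (\<Sum>z\<in>y ` W. a z * z i) = 0" "\<exists>z\<in>y ` W. a z \<noteq> 0"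
      using dep_k[of "y ` W" k] finW by auto
    define b where "b v = a (y v)" for v
    have dep: "(\<Sum>v\<in>W. b v * y v i) = 0" for i
      using a(1) sum.reindex[OF injW, of "\<lambda>z. a z * z i"] unfolding b_def by simp
    have nz: "\<exists>v\<in>W. b v \<noteq> 0" using a(2) unfolding b_def by auto
    have orth: "(\<Sum>v\<in>W. b v * G v w) = 0" for w
    proof -
      have "(\<Sum>v\<in>W. b v * G v w) = (\<Sum>v\<in>W. \<Sum>i<k. b v * y v i * y w i)"
        unfolding G_def sum_distrib_left by (simp add: mult.assoc)
      also have "\<dots> = (\<Sum>i<k. \<Sum>v\<in>W. b v * y v i * y w i)" by (rule sum.swap)
      also have "\<dots> = (\<Sum>i<k. (\<Sum>v\<in>W. b v * y v i) * y w i)"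
        by (simp add: sum_distrib_right)
      also have "\<dots> = 0" using dep by simp
      finally show ?thesis .
    qed
    define B where "B = (\<Sum>v\<in>W. b v)"
    have rs: "r^2 - s = 1/2" unfolding s_def by simp
    have eqC: "b w = -2 * s * B" if "w \<in> C" for w
    proof -
      have wn: "w < n" "w \<ge> 3" using that unfolding C_def by auto
      have "(\<Sum>v\<in>W. b v * G v w) = (\<Sum>v\<in>W. b v * s + (if v = w then b v * (r^2 - s) else 0))"
      proof (rule sum.cong)
        fix v assume "v \<in> W"
        hence vn: "v < n" using Wn by auto
        show "b v * G v w = b v * s + (if v = w then b v * (r^2 - s) else 0)"
        proof (cases "v = w")
          case True thus ?thesis using Gd[OF vn] by (simp add: algebra_simps)
        next
          case False
          hence "K_plus_eps3_edge v w" using wn unfolding K_plus_eps3_edge_def by auto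
          thus ?thesis using Ge[OF vn wn(1)] False by simp
        qed
      qed simp
      also have "\<dots> = s * B + b w * (r^2 - s)"
        using that finW unfolding B_def W_def
        by (simp add: sum.distrib sum_distrib_left[symmetric] mult.commute)
      finally have "s * B + b w * (r^2 - s) = 0" using orth by simp
      thus ?thesis using rs by simp
    qed
    define \<alpha> where "\<alpha> = -2 * s * B"
    define t where "t = G p q"
    have tlt: "t < r^2"
      using pos[of p q] diffsq[of p q] Gd[of p] Gd[of q] pq n unfolding t_def by simp
    have sumC: "(\<Sum>v\<in>C. b v) = real m * \<alpha>"
      using eqC cardC unfolding \<alpha>_def by simp
    have Gp: "G v p = s" "G v q = s" if "v \<in> C" for v
      using that pq n Ge unfolding C_def K_plus_eps3_edge_def by (auto simp: Gsym)
    have split: "(\<Sum>v\<in>W. h v) = h p + h q + (\<Sum>v\<in>C. h v)" for h :: "nat \<Rightarrow> real"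
      unfolding W_def using pC pq finC by simp
    have eqp: "b p * r^2 + b q * t + s * (\<Sum>v\<in>C. b v) = 0"
    proof -
      have "(\<Sum>v\<in>C. b v * G v p) = s * (\<Sum>v\<in>C. b v)"
        using Gp by (simp add: sum_distrib_left mult.commute)
      thus ?thesis using orth[of p] split[of "\<lambda>v. b v * G v p"] Gd[of p] pq n
        unfolding t_def by (simp add: Gsym)
    qed
    have eqq: "b q * r^2 + b p * t + s * (\<Sum>v\<in>C. b v) = 0"
    proof -
      have "(\<Sum>v\<in>C. b v * G v q) = s * (\<Sum>v\<in>C. b v)"
        using Gp by (simp add: sum_distrib_left mult.commute)
      thus ?thesis using orth[of q] split[of "\<lambda>v. b v * G v q"] Gd[of q] pq n
        unfolding t_def by simp
    qed
    have "(b p - b q) * (r^2 - t) = 0" using eqp eqq by (simp add: algebra_simps)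
    hence bpq: "b p = b q" using tlt by simp
    define \<beta> where "\<beta> = b p"
    have Bv: "B = 2 * \<beta> + real m * \<alpha>"
      unfolding B_def using split[of b] sumC bpq unfolding \<beta>_def by simp
    have al: "\<alpha> = -2 * s * (2 * \<beta> + real m * \<alpha>)" using Bv unfolding \<alpha>_def by simp
    have lin: "\<alpha> * S i + \<beta> * (y p i + y q i) = 0" for i
    proof -
      have "(\<Sum>v\<in>C. b v * y v i) = \<alpha> * S i"
        using eqC unfolding S_def \<alpha>_def by (simp add: sum_distrib_left)
      thus ?thesis using dep[of i] split[of "\<lambda>v. b v * y v i"] bpq unfolding \<beta>_def
        by (simp add: algebra_simps)
    qed
    have s0: "s \<noteq> 0" if "1 + 2 * s * real m = 0" using that by auto
    show ?thesis
    proof (cases "\<beta> = 0")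
      case True
      have "\<alpha> \<noteq> 0"
      proof
        assume "\<alpha> = 0"
        hence "b v = 0" if "v \<in> W" for v using that True bpq eqC
          unfolding W_def \<alpha>_def \<beta>_def by auto
        with nz show False by auto
      qed
      moreover have "\<alpha> * (1 + 2 * s * real m) = 0" using al True by (simp add: algebra_simps)
      ultimately have D0: "1 + 2 * s * real m = 0" by simp
      have "S i = 0" for i using lin[of i] True \<open>\<alpha> \<noteq> 0\<close> by simp
      hence "real m * s = 0" using dotS[of p] pq by simp
      thus ?thesis using m1 s0[OF D0] by simp
    next
      case False
      have aD: "\<alpha> * (1 + 2 * s * real m) = -4 * s * \<beta>" using al by (simp add: algebra_simps)
      have D: "1 + 2 * s * real m \<noteq> 0"
      proof
        assume D0: "1 + 2 * s * real m = 0"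
        hence "s * \<beta> = 0" using aD by simp
        thus False using False s0[OF D0] by simp
      qed
      show ?thesis
      proof (intro allI impI)
        fix i
        have "\<beta> * (y p i + y q i) = - \<alpha> * S i" using lin[of i] by simp
        hence "\<beta> * (y p i + y q i) * (1 + 2 * s * real m) = (- \<alpha> * S i) * (1 + 2 * s * real m)"
          by simp
        also have "\<dots> = - (\<alpha> * (1 + 2 * s * real m)) * S i" by (simp add: algebra_simps)
        also have "\<dots> = 4 * s * \<beta> * S i" using aD by simp
        finally have "\<beta> * (y p i + y q i) * (1 + 2 * s * real m) = 4 * s * \<beta> * S i" .
        hence "\<beta> * ((y p i + y q i) * (1 + 2 * s * real m)) = \<beta> * (4 * s * S i)"
          by (simp add: ac_simps)
        hence "(y p i + y q i) * (1 + 2 * s * real m) = 4 * s * S i"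
          using False by simp
        thus "y p i + y q i = 4 * s / (1 + 2 * s * real m) * S i"
          using D by (simp add: field_simps)
      qed
    qed
  qed
  have "\<forall>i<k. y 1 i = y 2 i"
  proof (intro allI impI)
    fix i assume "i < k"
    have "y 0 i + y 1 i = y 0 i + y 2 i" using pair[of 0 1] pair[of 0 2] \<open>i < k\<close> by simp
    thus "y 1 i = y 2 i" by simp
  qed
  hence "(\<Sum>i<k. (f 1 i - f 2 i)^2) = 0" unfolding y_def by simp
  with pos[of 1 2] n show False by simp
qed



lemma sphere_no_seg:
  assumes R: "in_Rk k a" "in_Rk k b" "in_Rk k w" "in_Rk k c"
    and d: "dist_k k a c = r" "dist_k k b c = r" "dist_k k w c = r"
    and ne: "w \<noteq> a" "w \<noteq> b"
  shows "\<not> on_segment w a b"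
proof
  assume "on_segment w a b"
  then obtain t where t: "0 \<le> t" "t \<le> 1" "w = (\<lambda>i. (1 - t) * a i + t * b i)"
    unfolding on_segment_def by blast
  define P where "P = (\<Sum>i<k. (a i - b i)^2)"
  have "(\<Sum>i<k. (w i - c i)^2) = (\<Sum>i<k. (1 - t) * (a i - c i)^2 + t * (b i - c i)^2 - t * (1 - t) * (a i - b i)^2)"
    by (rule sum.cong) (auto simp: t(3) power2_eq_square algebra_simps)
  also have "\<dots> = (1 - t) * r^2 + t * r^2 - t * (1 - t) * P"
    using dist_sq[OF d(1)] dist_sq[OF d(2)] unfolding P_def
    by (simp add: sum.distrib sum_subtractf sum_distrib_left[symmetric])
  finally have "t * (1 - t) * P = 0" using dist_sq[OF d(3)] by (simp add: algebra_simps)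
  moreover have "t \<noteq> 0" using ne(1) t(3) by auto
  moreover have "t \<noteq> 1" using ne(2) t(3) by auto
  ultimately have P0: "P = 0" by simp
  have "a = b"
  proof
    fix i show "a i = b i"
    proof (cases "i < k")
      case True
      have "(a i - b i)^2 \<le> P" unfolding P_def by (rule member_le_sum) (use True in auto)
      thus ?thesis using P0 by simp
    next
      case False thus ?thesis using R unfolding in_Rk_def by auto
    qed
  qed
  hence "w = a" using t(3) by (simp add: algebra_simps)
  thus False using ne by simp
qed

lemma two_delta:
  assumes "p \<noteq> q" "p < k" "q < k"
  shows "(\<Sum>i<(k::nat). ((if i = p then x else 0) - (if i = q then z else 0))^2) = x^2 + (z::real)^2"
proof -
  have "(\<Sum>i<k. ((if i = p then x else 0) - (if i = q then z else 0))^2)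
      = (\<Sum>i<k. (if i = p then x^2 else 0) + (if i = q then z^2 else 0))"
    by (rule sum.cong) (use assms in auto)
  also have "\<dots> = (\<Sum>i<k. if i = p then x^2 else 0) + (\<Sum>i<k. if i = q then z^2 else 0)"
    by (rule sum.distrib)
  also have "(\<Sum>i<k. if i = p then x^2 else 0) = x^2" using assms(2) by simp
  also have "(\<Sum>i<k. if i = q then z^2 else 0) = z^2" using assms(3) by simp
  finally show ?thesis .
qed

lemma upper:
  assumes n: "n \<ge> 4"
  shows "spherical_embedding (n - 1) (sqrt (1/2)) {..<n} K_plus_eps3_edge"
proof -
  define k where "k = n - 1"
  define a :: real where "a = sqrt (1/2)"
  define pos where "pos v = (if v = 0 \<or> v = 1 then n - 3 else if v = 2 then n - 2 else v - 3)" for v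
  define sg :: "nat \<Rightarrow> real" where "sg v = (if v = 1 then -1 else 1)" for v
  define f where "f v = (\<lambda>i. if i = pos v then sg v * a else 0)" for v
  define c :: "nat \<Rightarrow> real" where "c = (\<lambda>i. 0)"
  have a2: "a^2 = 1/2" unfolding a_def by simp
  have apos: "a > 0" unfolding a_def by simp
  have sg2: "(sg v * a)^2 = 1/2" for v unfolding sg_def using a2 by (simp add: power_mult_distrib)
  have sgnz: "sg v * a \<noteq> 0" for v unfolding sg_def using apos by simp
  have posk: "pos v < k" if "v < n" for v using that n unfolding pos_def k_def by auto
  have posinj: "u = v" if "u < n" "v < n" "pos u = pos v" "sg u = sg v" for u v
    using that n unfolding pos_def sg_def by (auto split: if_splits)
  have fR: "in_Rk k (f v)" if "v < n" for v
    using posk[OF that] unfolding in_Rk_def f_def by auto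
  have cR: "in_Rk k c" unfolding in_Rk_def c_def by simp
  have injf: "inj_on f {..<n}"
  proof (rule inj_onI)
    fix u v assume uv: "u \<in> {..<n}" "v \<in> {..<n}" "f u = f v"
    hence "f u (pos u) = f v (pos u)" by simp
    hence pe: "pos u = pos v" and "sg u * a = sg v * a"
      using sgnz[of u] unfolding f_def by (auto split: if_splits)
    hence "sg u = sg v" using apos by simp
    with pe uv show "u = v" using posinj by auto
  qed
  have dc: "dist_k k (f v) c = a" if "v < n" for v
  proof -
    have "(\<Sum>i<k. (f v i - c i)^2) = (\<Sum>i<k. if i = pos v then (sg v * a)^2 else 0)"
      by (rule sum.cong) (auto simp: f_def c_def)
    also have "\<dots> = 1/2" using posk[OF that] sg2 by simp
    finally show ?thesis unfolding dist_k_def a_def by simp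
  qed
  have de: "dist_k k (f u) (f v) = 1" if "u < n" "v < n" "K_plus_eps3_edge u v" for u v
  proof -
    have "pos u \<noteq> pos v" using that n unfolding pos_def K_plus_eps3_edge_def by auto
    hence "(\<Sum>i<k. (f u i - f v i)^2) = (sg u * a)^2 + (sg v * a)^2"
      unfolding f_def using two_delta posk that by blast
    thus ?thesis unfolding dist_k_def using sg2 by simp
  qed
  have "unit_distance_embedding k {..<n} K_plus_eps3_edge f"
    unfolding unit_distance_embedding_def
  proof (intro conjI ballI impI)
    fix u v w assume uvw: "u \<in> {..<n}" "v \<in> {..<n}" "w \<in> {..<n}"
      and e: "K_plus_eps3_edge u v \<and> w \<noteq> u \<and> w \<noteq> v"
    have "f w \<noteq> f u" "f w \<noteq> f v" using e uvw injf by (auto dest: inj_onD)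
    thus "\<not> on_segment (f w) (f u) (f v)"
      using sphere_no_seg[OF fR fR fR cR dc dc dc] uvw by auto
  qed (use fR injf de in auto)
  thus ?thesis unfolding spherical_embedding_def k_def[symmetric] a_def[symmetric]
    using cR dc by blast
qed

theorem mainTheorem17:
  fixes n :: nat
  assumes "n \<ge> 4"
  shows "sdim {..<n} K_plus_eps3_edge = n - 1"
  unfolding sdim_def
proof (rule Least_equality)
  show "\<exists>r<1. spherical_embedding (n - 1) r {..<n} K_plus_eps3_edge"
    using upper[OF assms] by (intro exI[of _ "sqrt (1/2)"]) simp
next
  fix k assume "\<exists>r<1. spherical_embedding k r {..<n} K_plus_eps3_edge"
  then obtain r f c where "unit_distance_embedding k {..<n} K_plus_eps3_edge f" "in_Rk k c"
      "\<forall>v\<in>{..<n}. dist_k k (f v) c = r"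
    unfolding spherical_embedding_def by blast
  show "n - 1 \<le> k"
  proof (rule ccontr)
    assume "\<not> n - 1 \<le> k"
    hence "k \<le> n - 2" by simp
    from lower[OF assms this] show False using \<open>unit_distance_embedding k _ _ f\<close> \<open>in_Rk k c\<close> \<open>\<forall>v\<in>{..<n}. _\<close> by blast
  qed
qed

end
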